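(* Let $R$ be a discrete valuation domain with maximal ideal $P=Rp$. Then, up to isomorphism, the indecomposable pseudo-absorbing primary multiplication $R$-modules are exactly: (1) $R$; (2) $R/P^n$ for $n\geq1$.
   Context: A proper ideal $I$ of a commutative ring $A$ is 2-absorbing primary if whenever $a,b,c\in A$ and $abc\in I$ then $ab\in I$ or $ac\in\sqrt I$ or $bc\in\sqrt I$. A proper submodule $N$ of an $A$-module $M$ is pseudo-absorbing primary if $(N:_AM)=\{r\in A:rM\subseteq N\}$ is a 2-absorbing primary ideal of $A$. $M$ is a pseudo-absorbing primary multiplication module if for every pseudo-absorbing primary submodule $N$ of $M$ there is an ideal $I$ of $A$ with $N=IM$. *)

theory Defs
  imports "HOL-Algebra.Algebra"
begin

definition DVR :: "('a, 'c) ring_scheme \<Rightarrow> bool" where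
  "DVR R \<longleftrightarrow> principal_domain R \<and> (\<exists>!P. primeideal P R \<and> P \<noteq> {\<zero>\<^bsub>R\<^esub>})"

definition ideal_radical :: "('a, 'c) ring_scheme \<Rightarrow> 'a set \<Rightarrow> 'a set" where
  "ideal_radical R I = {r \<in> carrier R. \<exists>n::nat. r [^]\<^bsub>R\<^esub> n \<in> I}"

definition two_absorbing_primary :: "('a, 'c) ring_scheme \<Rightarrow> 'a set \<Rightarrow> bool" where
  "two_absorbing_primary R I \<longleftrightarrow> ideal I R \<and> I \<noteq> carrier R \<and>
     (\<forall>a\<in>carrier R. \<forall>b\<in>carrier R. \<forall>c\<in>carrier R.
        a \<otimes>\<^bsub>R\<^esub> b \<otimes>\<^bsub>R\<^esub> c \<in> I \<longrightarrow>
          a \<otimes>\<^bsub>R\<^esub> b \<in> I \<or> a \<otimes>\<^bsub>R\<^esub> c \<in> ideal_radical R I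
          \<or> b \<otimes>\<^bsub>R\<^esub> c \<in> ideal_radical R I)"

definition module_colon :: "('a, 'c) ring_scheme \<Rightarrow> ('a, 'b, 'd) module_scheme \<Rightarrow> 'b set \<Rightarrow> 'a set" where
  "module_colon R M N = {r \<in> carrier R. \<forall>x\<in>carrier M. r \<odot>\<^bsub>M\<^esub> x \<in> N}"

definition pseudo_absorbing_primary :: "('a, 'c) ring_scheme \<Rightarrow> ('a, 'b, 'd) module_scheme \<Rightarrow> 'b set \<Rightarrow> bool" where
  "pseudo_absorbing_primary R M N \<longleftrightarrow> submodule N R M \<and> N \<noteq> carrier M \<and>
     two_absorbing_primary R (module_colon R M N)"

definition ideal_times_module :: "('a, 'c) ring_scheme \<Rightarrow> 'a set \<Rightarrow> ('a, 'b, 'd) module_scheme \<Rightarrow> 'b set" where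
  "ideal_times_module R I M =
     \<Inter>{N. submodule N R M \<and> {a \<odot>\<^bsub>M\<^esub> m | a m. a \<in> I \<and> m \<in> carrier M} \<subseteq> N}"

definition pap_multiplication_module :: "('a, 'c) ring_scheme \<Rightarrow> ('a, 'b, 'd) module_scheme \<Rightarrow> bool" where
  "pap_multiplication_module R M \<longleftrightarrow> module R M \<and>
     (\<forall>N. pseudo_absorbing_primary R M N \<longrightarrow> (\<exists>I. ideal I R \<and> N = ideal_times_module R I M))"

definition indecomposable_module :: "('a, 'c) ring_scheme \<Rightarrow> ('a, 'b, 'd) module_scheme \<Rightarrow> bool" where
  "indecomposable_module R M \<longleftrightarrow> carrier M \<noteq> {\<zero>\<^bsub>M\<^esub>} \<and>
     \<not> (\<exists>N K. submodule N R M \<and> submodule K R M \<and> N \<noteq> {\<zero>\<^bsub>M\<^esub>} \<and> K \<noteq> {\<zero>\<^bsub>M\<^esub>} \<and>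
            N \<inter> K = {\<zero>\<^bsub>M\<^esub>} \<and> N <+>\<^bsub>M\<^esub> K = carrier M)"

definition module_iso :: "('a, 'c) ring_scheme \<Rightarrow> ('a, 'b, 'd) module_scheme \<Rightarrow> ('a, 'e, 'f) module_scheme \<Rightarrow> bool" where
  "module_iso R M N \<longleftrightarrow> (\<exists>f. bij_betw f (carrier M) (carrier N) \<and>
     (\<forall>x\<in>carrier M. \<forall>y\<in>carrier M. f (x \<oplus>\<^bsub>M\<^esub> y) = f x \<oplus>\<^bsub>N\<^esub> f y) \<and>
     (\<forall>r\<in>carrier R. \<forall>x\<in>carrier M. f (r \<odot>\<^bsub>M\<^esub> x) = r \<odot>\<^bsub>N\<^esub> f x))"

definition self_module :: "('a, 'c) ring_scheme \<Rightarrow> ('a, 'a) module" where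
  "self_module R = \<lparr>carrier = carrier R, monoid.mult = monoid.mult R, monoid.one = \<one>\<^bsub>R\<^esub>,
     ring.zero = \<zero>\<^bsub>R\<^esub>, ring.add = ring.add R, smult = monoid.mult R\<rparr>"

definition quot_module :: "('a, 'c) ring_scheme \<Rightarrow> 'a set \<Rightarrow> ('a, 'a set) module" where
  "quot_module R I = \<lparr>carrier = carrier (R Quot I), monoid.mult = monoid.mult (R Quot I),
     monoid.one = \<one>\<^bsub>(R Quot I)\<^esub>, ring.zero = \<zero>\<^bsub>(R Quot I)\<^esub>, ring.add = ring.add (R Quot I),
     smult = (\<lambda>r C. monoid.mult (R Quot I) (a_r_coset R I r) C)\<rparr>"

end

theory Submission
  imports Defs
begin


locale dvr_loc = principal_domain R for R (structure) + fixes p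
  assumes p_carr: "p \<in> carrier R" and p_max: "maximalideal (PIdl p) R"
    and uniq: "\<exists>!P. primeideal P R \<and> P \<noteq> {\<zero>}"
begin

lemma PIdl_mem: "x \<in> PIdl a \<longleftrightarrow> (\<exists>r\<in>carrier R. x = r \<otimes> a)"
  unfolding cgenideal_def by blast

lemma uniq_eq:
  assumes "primeideal P R" "P \<noteq> {\<zero>}" "primeideal Q R" "Q \<noteq> {\<zero>}" shows "P = Q"
proof -
  from uniq obtain P0 where h: "\<And>Y. primeideal Y R \<and> Y \<noteq> {\<zero>} \<Longrightarrow> Y = P0"
    by (elim ex1E) blast
  show ?thesis using h[of P] h[of Q] assms by simp
qed

lemma p_nonzero: "p \<noteq> \<zero>"
proof
  assume p0: "p = \<zero>"
  obtain P where P: "primeideal P R" "P \<noteq> {\<zero>}" using uniq by (metis (no_types, lifting))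
  have "PIdl p = {\<zero>}"
  proof
    show "PIdl p \<subseteq> {\<zero>}"
    proof
      fix x assume "x \<in> PIdl p"
      then obtain r where "r \<in> carrier R" "x = r \<otimes> p" using PIdl_mem by blast
      thus "x \<in> {\<zero>}" using p0 by simp
    qed
    show "{\<zero>} \<subseteq> PIdl p" using additive_subgroup.zero_closed[OF ideal.axioms(1)[OF cgenideal_ideal[OF p_carr]]] by simp
  qed
  moreover have "ideal P R" using P(1) primeideal.axioms(1) by blast
  moreover have "PIdl p \<subseteq> P" using calculation
      additive_subgroup.zero_closed[OF ideal.axioms(1)[OF \<open>ideal P R\<close>]] by simp
  moreover have "P \<subseteq> carrier R" using ideal.Icarr[OF \<open>ideal P R\<close>] by blast
  ultimately have "P = {\<zero>} \<or> P = carrier R"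
    using maximalideal.I_maximal[OF p_max, of P] by simp
  thus False using P primeideal.I_notcarr by blast
qed

lemma p_nonunit: "p \<notin> Units R"
  using ideal_eq_carrier_iff[OF p_carr] maximalideal.I_notcarr[OF p_max] by auto

lemma p_prime: "primeideal (PIdl p) R"
  using maximalideal_prime[OF p_max] .

lemma p_in: "p \<in> PIdl p" using cgenideal_self[OF p_carr] .

lemma nonunit_in_P:
  assumes a: "a \<in> carrier R" "a \<notin> Units R" shows "a \<in> PIdl p"
proof (cases "a = \<zero>")
  case True thus ?thesis using p_carr additive_subgroup.zero_closed[OF ideal.axioms(1)[OF cgenideal_ideal[OF p_carr]]] by simp
next
  case False
  obtain b where b: "b \<in> carrier R" "ring_irreducible b" "b divides a"
    using exists_irreducible_divisor[of a] a False by blast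
  have bp: "primeideal (PIdl b) R"
    using maximalideal_prime[OF irreducible_imp_maximalideal[OF b(1,2)]] .
  have "PIdl b \<noteq> {\<zero>}" using cgenideal_self[OF b(1)] ring_irreducibleE(1)[OF b(1,2)] by blast
  moreover have "PIdl p \<noteq> {\<zero>}" using p_in p_nonzero by blast
  ultimately have "PIdl b = PIdl p" using uniq_eq bp p_prime by blast
  hence "p \<sim> b" using associated_iff_same_ideal[OF p_carr b(1)] by simp
  hence "p divides b" by (rule associatedD)
  hence "p divides a" using divides_trans[OF _ b(3) p_carr] by simp
  thus ?thesis using to_contain_is_to_divide[OF p_carr a(1)] cgenideal_self[OF a(1)] by blast
qed

lemma notin_P_unit: "a \<in> carrier R \<Longrightarrow> a \<notin> PIdl p \<Longrightarrow> a \<in> Units R"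
  using nonunit_in_P by blast

lemma irr_assoc_p:
  assumes "x \<in> carrier R" "x \<noteq> \<zero>" "irreducible (mult_of R) x"
  shows "\<exists>u\<in>Units R. x = u \<otimes> p"
proof -
  have ri: "ring_irreducible x" using assms irreducible_mult_imp_irreducible[of x] unfolding ring_irreducible_def by auto
  have bp: "primeideal (PIdl x) R"
    using maximalideal_prime[OF irreducible_imp_maximalideal[OF assms(1) ri]] .
  have "PIdl x \<noteq> {\<zero>}" using cgenideal_self[OF assms(1)] assms(2) by blast
  moreover have "PIdl p \<noteq> {\<zero>}" using p_in p_nonzero by blast
  ultimately have "PIdl x = PIdl p" using uniq_eq bp p_prime by blast
  hence "x \<sim> p" using associated_iff_same_ideal[OF assms(1) p_carr] by blast
  thus ?thesis using ring_associated_iff[OF assms(1) p_carr] by blast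
qed

lemma foldr_form:
  assumes "\<forall>x\<in>set fs. x \<in> carrier R \<and> x \<noteq> \<zero> \<and> irreducible (mult_of R) x"
  shows "\<exists>u\<in>Units R. foldr (\<otimes>) fs \<one> = u \<otimes> p [^] length fs"
  using assms
proof (induction fs)
  case Nil thus ?case by (intro bexI[of _ \<one>]) auto
next
  case (Cons x fs)
  then obtain u where u: "u \<in> Units R" "foldr (\<otimes>) fs \<one> = u \<otimes> p [^] length fs" by auto
  obtain v where v: "v \<in> Units R" "x = v \<otimes> p" using irr_assoc_p Cons.prems by auto
  have "foldr (\<otimes>) (x # fs) \<one> = (v \<otimes> u) \<otimes> p [^] length (x # fs)"
  proof -
    have c: "u \<in> carrier R" "v \<in> carrier R" "p [^] length fs \<in> carrier R" using u v p_carr by auto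
    have "foldr (\<otimes>) (x # fs) \<one> = (v \<otimes> p) \<otimes> (u \<otimes> p [^] length fs)" using u v by simp
    also have "\<dots> = (v \<otimes> u) \<otimes> (p \<otimes> p [^] length fs)" using c p_carr by (simp add: m_assoc m_lcomm[of p u])
    also have "p \<otimes> p [^] length fs = p [^] length (x # fs)" using p_carr nat_pow_Suc2 by simp
    finally show ?thesis .
  qed
  moreover have "v \<otimes> u \<in> Units R" using u v by simp
  ultimately show ?case by blast
qed

lemma valuation:
  assumes a: "a \<in> carrier R" "a \<noteq> \<zero>"
  shows "\<exists>u\<in>Units R. \<exists>n::nat. a = u \<otimes> p [^] n"
proof (cases "a \<in> Units R")
  case True thus ?thesis using a by (intro bexI[of _ a] exI[of _ 0]) auto
next
  case False
  obtain fs where fs: "set fs \<subseteq> carrier (mult_of R)" "wfactors (mult_of R) fs a"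
    using factorization_property[of a] a False by blast
  have "\<forall>x\<in>set fs. x \<in> carrier R \<and> x \<noteq> \<zero> \<and> irreducible (mult_of R) x"
    using fs unfolding wfactors_def by auto
  then obtain u where u: "u \<in> Units R" "foldr (\<otimes>) fs \<one> = u \<otimes> p [^] length fs"
    using foldr_form by blast
  have fc: "foldr (\<otimes>) fs \<one> \<in> carrier R" using u p_carr by auto
  have "foldr (\<otimes>) fs \<one> \<sim>\<^bsub>mult_of R\<^esub> a" using fs(2) unfolding wfactors_def by simp
  hence "a \<sim> foldr (\<otimes>) fs \<one>" using assoc_iff_assoc_mult[OF fc a(1)] associated_sym by blast
  then obtain w where w: "w \<in> Units R" "a = w \<otimes> foldr (\<otimes>) fs \<one>"
    using ring_associated_iff[OF a(1) fc] by blast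
  have "a = (w \<otimes> u) \<otimes> p [^] length fs" using w u p_carr Units_closed[OF u(1)] Units_closed[OF w(1)] by (simp add: m_assoc)
  thus ?thesis using w u by blast
qed

end


lemma (in cring) ideal_closure:
  assumes "I \<subseteq> carrier R" "\<zero> \<in> I" "\<And>a b. a \<in> I \<Longrightarrow> b \<in> I \<Longrightarrow> a \<oplus> b \<in> I"
    "\<And>a x. a \<in> I \<Longrightarrow> x \<in> carrier R \<Longrightarrow> x \<otimes> a \<in> I"
  shows "ideal I R"
proof (rule idealI[OF ring_axioms])
  show "subgroup I (add_monoid R)"
  proof (rule add.subgroupI)
    show "I \<subseteq> carrier R" using assms(1) by simp
    show "I \<noteq> {}" using assms(2) by blast
    fix a b assume a: "a \<in> I"
    have ac: "a \<in> carrier R" using a assms(1) by blast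
    have "\<ominus> \<one> \<otimes> a \<in> I" using assms(4)[OF a] by simp
    moreover have "\<ominus> \<one> \<otimes> a = \<ominus> a" using ac by (simp add: l_minus)
    ultimately show "\<ominus> a \<in> I" by simp
    assume "b \<in> I"
    thus "a \<oplus> b \<in> I" using assms(3) a by simp
  qed
  fix a x assume a: "a \<in> I" and x: "x \<in> carrier R"
  show "x \<otimes> a \<in> I" using assms(4) a x by blast
  show "a \<otimes> x \<in> I" using assms(4) a x m_comm assms(1) by (metis subsetD)
qed

lemma (in module) smult_minus_eq:
  assumes "r \<in> carrier R" "s \<in> carrier R" "m \<in> carrier M"
  shows "r \<odot>\<^bsub>M\<^esub> m = s \<odot>\<^bsub>M\<^esub> m \<longleftrightarrow> (r \<ominus> s) \<odot>\<^bsub>M\<^esub> m = \<zero>\<^bsub>M\<^esub>"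
proof -
  have e: "(r \<ominus> s) \<odot>\<^bsub>M\<^esub> m = r \<odot>\<^bsub>M\<^esub> m \<oplus>\<^bsub>M\<^esub> \<ominus>\<^bsub>M\<^esub> (s \<odot>\<^bsub>M\<^esub> m)"
    using assms by (simp add: a_minus_def smult_l_distr smult_l_minus)
  show ?thesis
  proof
    assume "r \<odot>\<^bsub>M\<^esub> m = s \<odot>\<^bsub>M\<^esub> m" thus "(r \<ominus> s) \<odot>\<^bsub>M\<^esub> m = \<zero>\<^bsub>M\<^esub>"
      using e assms by (simp add: M.r_neg)
  next
    assume "(r \<ominus> s) \<odot>\<^bsub>M\<^esub> m = \<zero>\<^bsub>M\<^esub>"
    hence "r \<odot>\<^bsub>M\<^esub> m \<oplus>\<^bsub>M\<^esub> \<ominus>\<^bsub>M\<^esub> (s \<odot>\<^bsub>M\<^esub> m) = \<zero>\<^bsub>M\<^esub>" using e by simp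
    hence "\<ominus>\<^bsub>M\<^esub> (\<ominus>\<^bsub>M\<^esub> (s \<odot>\<^bsub>M\<^esub> m)) = r \<odot>\<^bsub>M\<^esub> m"
      using assms by (intro M.minus_equality) (simp_all add: M.a_comm)
    thus "r \<odot>\<^bsub>M\<^esub> m = s \<odot>\<^bsub>M\<^esub> m" using assms by simp
  qed
qed

lemma IM_gen: "a \<in> I \<Longrightarrow> x \<in> carrier M \<Longrightarrow> a \<odot>\<^bsub>M\<^esub> x \<in> ideal_times_module R I M"
  unfolding ideal_times_module_def by blast

lemma IM_least: "submodule N R M \<Longrightarrow> (\<And>a x. a \<in> I \<Longrightarrow> x \<in> carrier M \<Longrightarrow> a \<odot>\<^bsub>M\<^esub> x \<in> N)
   \<Longrightarrow> ideal_times_module R I M \<subseteq> N"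
  unfolding ideal_times_module_def by blast

lemma cyclic_mult:
  fixes R (structure)
  assumes mod: "module R M" and m: "m \<in> carrier M"
    and gen: "\<forall>x\<in>carrier M. \<exists>r\<in>carrier R. x = r \<odot>\<^bsub>M\<^esub> m"
  shows "pap_multiplication_module R M"
  unfolding pap_multiplication_module_def
proof (intro conjI allI impI)
  interpret module R M by (rule mod)
  show "module R M" by (rule mod)
  fix N assume "pseudo_absorbing_primary R M N"
  hence N: "submodule N R M" by (simp add: pseudo_absorbing_primary_def)
  note NE = submoduleE[OF N]
  define J where "J = {r \<in> carrier R. r \<odot>\<^bsub>M\<^esub> m \<in> N}"
  have "ideal J R"
  proof (rule ideal_closure)
    show "J \<subseteq> carrier R" unfolding J_def by blast
    obtain b where b: "b \<in> N" using NE(2) by blast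
    have "\<zero> \<odot>\<^bsub>M\<^esub> m = \<zero> \<odot>\<^bsub>M\<^esub> b" using b NE(1) m by auto
    thus "\<zero> \<in> J" unfolding J_def using NE(4)[OF _ b] by simp
    fix a b assume a: "a \<in> J"
    { assume b: "b \<in> J"
      thus "a \<oplus> b \<in> J" using a NE(5) m unfolding J_def by (simp add: smult_l_distr) }
    { assume b: "b \<in> carrier R"
      thus "b \<otimes> a \<in> J" using a NE(4) m unfolding J_def by (simp add: smult_assoc1) }
  qed
  moreover have "N = ideal_times_module R J M"
  proof
    show "N \<subseteq> ideal_times_module R J M"
    proof
      fix y assume y: "y \<in> N"
      then obtain r where r: "r \<in> carrier R" "y = r \<odot>\<^bsub>M\<^esub> m" using gen NE(1) by blast
      hence "r \<in> J" using y unfolding J_def by simp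
      thus "y \<in> ideal_times_module R J M" using IM_gen[OF _ m] r by simp
    qed
    show "ideal_times_module R J M \<subseteq> N"
    proof (rule IM_least[OF N])
      fix a x assume a: "a \<in> J" and x: "x \<in> carrier M"
      then obtain s where s: "s \<in> carrier R" "x = s \<odot>\<^bsub>M\<^esub> m" using gen by blast
      have ac: "a \<in> carrier R" using a unfolding J_def by simp
      have "a \<odot>\<^bsub>M\<^esub> x = s \<odot>\<^bsub>M\<^esub> (a \<odot>\<^bsub>M\<^esub> m)"
        using s ac m by (simp add: smult_assoc1[symmetric] m_comm)
      thus "a \<odot>\<^bsub>M\<^esub> x \<in> N" using NE(4) s(1) a unfolding J_def by simp
    qed
  qed
  ultimately show "\<exists>I. ideal I R \<and> N = ideal_times_module R I M" by blast
qed

lemma cyclic_iso: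
  fixes R (structure)
  assumes mod: "module R M" and m: "m \<in> carrier M"
    and gen: "\<forall>x\<in>carrier M. \<exists>r\<in>carrier R. x = r \<odot>\<^bsub>M\<^esub> m"
    and ann: "\<forall>r\<in>carrier R. (r \<odot>\<^bsub>M\<^esub> m = \<zero>\<^bsub>M\<^esub>) = (r \<in> I)"
    and Xc: "carrier XX = h ` carrier R"
    and Xa: "\<forall>r\<in>carrier R. \<forall>s\<in>carrier R. h (r \<oplus>\<^bsub>R\<^esub> s) = h r \<oplus>\<^bsub>XX\<^esub> h s"
    and Xs: "\<forall>t\<in>carrier R. \<forall>r\<in>carrier R. t \<odot>\<^bsub>XX\<^esub> h r = h (t \<otimes>\<^bsub>R\<^esub> r)"
    and Xe: "\<forall>r\<in>carrier R. \<forall>s\<in>carrier R. (h r = h s) = (r \<ominus>\<^bsub>R\<^esub> s \<in> I)"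
  shows "module_iso R M XX"
proof -
  interpret module R M by (rule mod)
  have eqv: "r \<odot>\<^bsub>M\<^esub> m = s \<odot>\<^bsub>M\<^esub> m \<longleftrightarrow> h r = h s" if "r \<in> carrier R" "s \<in> carrier R" for r s
    using smult_minus_eq[OF that m] ann Xe that by simp
  define f where "f x = h (SOME r. r \<in> carrier R \<and> x = r \<odot>\<^bsub>M\<^esub> m)" for x
  have key: "f (r \<odot>\<^bsub>M\<^esub> m) = h r" if r: "r \<in> carrier R" for r
  proof -
    let ?s = "SOME s. s \<in> carrier R \<and> r \<odot>\<^bsub>M\<^esub> m = s \<odot>\<^bsub>M\<^esub> m"
    have "?s \<in> carrier R \<and> r \<odot>\<^bsub>M\<^esub> m = ?s \<odot>\<^bsub>M\<^esub> m" by (rule someI_ex) (use r in blast)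
    hence "h ?s = h r" using eqv[of ?s r] r by simp
    thus ?thesis unfolding f_def by simp
  qed
  have "bij_betw f (carrier M) (carrier XX)"
    unfolding bij_betw_def
  proof
    show "inj_on f (carrier M)"
    proof (rule inj_onI)
      fix x y assume x: "x \<in> carrier M" and y: "y \<in> carrier M" and e: "f x = f y"
      obtain r where r: "r \<in> carrier R" "x = r \<odot>\<^bsub>M\<^esub> m" using gen x by blast
      obtain s where s: "s \<in> carrier R" "y = s \<odot>\<^bsub>M\<^esub> m" using gen y by blast
      have "h r = h s" using e key r s by simp
      thus "x = y" using eqv[of r s] r s by simp
    qed
    show "f ` carrier M = carrier XX"
    proof
      show "f ` carrier M \<subseteq> carrier XX"
      proof
        fix z assume "z \<in> f ` carrier M"
        then obtain x where x: "x \<in> carrier M" "z = f x" by blast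
        obtain r where r: "r \<in> carrier R" "x = r \<odot>\<^bsub>M\<^esub> m" using gen x by blast
        show "z \<in> carrier XX" using x r key Xc by simp
      qed
      show "carrier XX \<subseteq> f ` carrier M"
      proof
        fix z assume "z \<in> carrier XX"
        then obtain r where r: "r \<in> carrier R" "z = h r" using Xc by blast
        have "r \<odot>\<^bsub>M\<^esub> m \<in> carrier M" using r m by simp
        moreover have "z = f (r \<odot>\<^bsub>M\<^esub> m)" using key r by simp
        ultimately show "z \<in> f ` carrier M" by (rule rev_image_eqI)
      qed
    qed
  qed
  moreover have "\<forall>x\<in>carrier M. \<forall>y\<in>carrier M. f (x \<oplus>\<^bsub>M\<^esub> y) = f x \<oplus>\<^bsub>XX\<^esub> f y"
  proof (intro ballI)
    fix x y assume x: "x \<in> carrier M" and y: "y \<in> carrier M"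
    obtain r where r: "r \<in> carrier R" "x = r \<odot>\<^bsub>M\<^esub> m" using gen x by blast
    obtain s where s: "s \<in> carrier R" "y = s \<odot>\<^bsub>M\<^esub> m" using gen y by blast
    have "x \<oplus>\<^bsub>M\<^esub> y = (r \<oplus> s) \<odot>\<^bsub>M\<^esub> m" using r s m by (simp add: smult_l_distr)
    thus "f (x \<oplus>\<^bsub>M\<^esub> y) = f x \<oplus>\<^bsub>XX\<^esub> f y" using key r s Xa by simp
  qed
  moreover have "\<forall>t\<in>carrier R. \<forall>x\<in>carrier M. f (t \<odot>\<^bsub>M\<^esub> x) = t \<odot>\<^bsub>XX\<^esub> f x"
  proof (intro ballI)
    fix t x assume t: "t \<in> carrier R" and x: "x \<in> carrier M"
    obtain r where r: "r \<in> carrier R" "x = r \<odot>\<^bsub>M\<^esub> m" using gen x by blast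
    have "t \<odot>\<^bsub>M\<^esub> x = (t \<otimes> r) \<odot>\<^bsub>M\<^esub> m" using r t m by (simp add: smult_assoc1)
    thus "f (t \<odot>\<^bsub>M\<^esub> x) = t \<odot>\<^bsub>XX\<^esub> f x" using key r t Xs by simp
  qed
  ultimately show ?thesis unfolding module_iso_def by blast
qed

lemma iso_cyclic:
  fixes R (structure)
  assumes mod: "module R M" and iso: "module_iso R M XX"
    and Xc: "carrier XX = h ` carrier R"
    and Xs: "\<forall>t\<in>carrier R. \<forall>r\<in>carrier R. t \<odot>\<^bsub>XX\<^esub> h r = h (t \<otimes>\<^bsub>R\<^esub> r)"
    and Xe: "\<forall>r\<in>carrier R. \<forall>s\<in>carrier R. (h r = h s) = (r \<ominus>\<^bsub>R\<^esub> s \<in> I)"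
  shows "\<exists>m\<in>carrier M. (\<forall>x\<in>carrier M. \<exists>r\<in>carrier R. x = r \<odot>\<^bsub>M\<^esub> m)
           \<and> (\<forall>r\<in>carrier R. (r \<odot>\<^bsub>M\<^esub> m = \<zero>\<^bsub>M\<^esub>) = (r \<in> I))"
proof -
  interpret module R M by (rule mod)
  obtain f where bij: "bij_betw f (carrier M) (carrier XX)"
    and fs: "\<forall>r\<in>carrier R. \<forall>x\<in>carrier M. f (r \<odot>\<^bsub>M\<^esub> x) = r \<odot>\<^bsub>XX\<^esub> f x"
    using iso unfolding module_iso_def by blast
  have inj: "inj_on f (carrier M)" and img: "f ` carrier M = carrier XX"
    using bij unfolding bij_betw_def by auto
  have "h \<one> \<in> carrier XX" using Xc by simp
  hence "h \<one> \<in> f ` carrier M" using img by simp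
  then obtain m where m: "m \<in> carrier M" "f m = h \<one>" by (elim imageE) simp
  have fr: "f (r \<odot>\<^bsub>M\<^esub> m) = h r" if "r \<in> carrier R" for r
    using fs m that Xs by simp
  have "\<forall>x\<in>carrier M. \<exists>r\<in>carrier R. x = r \<odot>\<^bsub>M\<^esub> m"
  proof
    fix x assume x: "x \<in> carrier M"
    then have "f x \<in> carrier XX" using img by blast
    then obtain r where r: "r \<in> carrier R" "f x = h r" using Xc by blast
    have "f x = f (r \<odot>\<^bsub>M\<^esub> m)" using r fr by simp
    moreover have "r \<odot>\<^bsub>M\<^esub> m \<in> carrier M" using r m by simp
    ultimately have "x = r \<odot>\<^bsub>M\<^esub> m" using inj_onD[OF inj _ x] by blast
    thus "\<exists>r\<in>carrier R. x = r \<odot>\<^bsub>M\<^esub> m" using r by blast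
  qed
  moreover have "\<forall>r\<in>carrier R. (r \<odot>\<^bsub>M\<^esub> m = \<zero>\<^bsub>M\<^esub>) = (r \<in> I)"
  proof
    fix r assume r: "r \<in> carrier R"
    have "(r \<odot>\<^bsub>M\<^esub> m = \<zero>\<^bsub>M\<^esub>) = (r \<odot>\<^bsub>M\<^esub> m = \<zero> \<odot>\<^bsub>M\<^esub> m)" using m by simp
    also have "\<dots> = (f (r \<odot>\<^bsub>M\<^esub> m) = f (\<zero> \<odot>\<^bsub>M\<^esub> m))"
      using inj r m inj_on_eq_iff[OF inj] by simp
    also have "\<dots> = (h r = h \<zero>)" using fr r by simp
    also have "\<dots> = (r \<in> I)" using Xe r by (simp add: a_minus_def)
    finally show "(r \<odot>\<^bsub>M\<^esub> m = \<zero>\<^bsub>M\<^esub>) = (r \<in> I)" .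
  qed
  ultimately show ?thesis using m by blast
qed



context dvr_loc begin

lemma PIdl_zero: "PIdl \<zero> = {\<zero>}"
proof
  show "PIdl \<zero> \<subseteq> {\<zero>}"
  proof
    fix x assume "x \<in> PIdl \<zero>"
    then obtain r where "r \<in> carrier R" "x = r \<otimes> \<zero>" using PIdl_mem by blast
    thus "x \<in> {\<zero>}" by simp
  qed
  show "{\<zero>} \<subseteq> PIdl \<zero>" using additive_subgroup.zero_closed[OF ideal.axioms(1)[OF cgenideal_ideal[OF zero_closed]]] by simp
qed

lemma assoc_pow:
  assumes "a \<in> carrier R" "a \<noteq> \<zero>"
  shows "\<exists>n. a \<sim> p [^] (n::nat)"
proof -
  obtain u n where u: "u \<in> Units R" "a = u \<otimes> p [^] (n::nat)" using valuation[OF assms] by blast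
  have "a \<sim> p [^] n" using ring_associated_iff[OF assms(1), of "p [^] n"] u p_carr by auto
  thus ?thesis by blast
qed

lemma pow_divides: "i \<le> j \<Longrightarrow> p [^] (i::nat) divides p [^] j"
proof -
  assume "i \<le> j"
  hence "p [^] j = p [^] i \<otimes> p [^] (j - i)" using nat_pow_mult[OF p_carr, of i "j - i"] by simp
  moreover have "p [^] (j - i) \<in> carrier R" using p_carr by simp
  ultimately show ?thesis by (intro dividesI) 
qed

lemma total_div:
  assumes a: "a \<in> carrier R" and b: "b \<in> carrier R"
  shows "a divides b \<or> b divides a"
proof (cases "a = \<zero> \<or> b = \<zero>")
  case True thus ?thesis using divides_zero a b by blast
next
  case False
  obtain i where i: "a \<sim> p [^] (i::nat)" using assoc_pow a False by blast
  obtain j where j: "b \<sim> p [^] (j::nat)" using assoc_pow b False by blast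
  have pc: "p [^] (i::nat) \<in> carrier R" "p [^] (j::nat) \<in> carrier R" using p_carr by auto
  show ?thesis
  proof (cases "i \<le> j")
    case True
    have "a divides p [^] i" using associatedD[OF i] .
    also have "p [^] i divides p [^] j" using pow_divides True .
    also have "p [^] j divides b" using associatedD[OF associated_sym[OF j]] .
    finally show ?thesis using a by blast
  next
    case False
    have "b divides p [^] j" using associatedD[OF j] .
    also have "p [^] j divides p [^] i" using pow_divides False by simp
    also have "p [^] i divides a" using associatedD[OF associated_sym[OF i]] .
    finally show ?thesis using b by blast
  qed
qed

lemma sub_radical: "I \<subseteq> carrier R \<Longrightarrow> I \<subseteq> ideal_radical R I"
proof
  fix x assume a1: "I \<subseteq> carrier R" and a2: "x \<in> I"
  have xc: "x \<in> carrier R" using a1 a2 by blast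
  have "x [^] (1::nat) = x" using xc by (simp add: nat_pow_def)
  hence "x [^] (1::nat) \<in> I" using a2 by simp
  hence "\<exists>n::nat. x [^] n \<in> I" by blast
  thus "x \<in> ideal_radical R I" unfolding ideal_radical_def using xc by blast
qed

lemma two_abs:
  assumes I: "ideal I R" and prp: "I \<noteq> carrier R"
  shows "two_absorbing_primary R I"
proof -
  obtain a where a: "a \<in> carrier R" "I = PIdl a" using exists_gen[OF I] by (elim bexE)
  have Ic: "I \<subseteq> carrier R" using ideal.Icarr[OF I] by blast
  have main: "x \<otimes> y \<in> I \<or> x \<otimes> z \<in> ideal_radical R I \<or> y \<otimes> z \<in> ideal_radical R I"
    if x: "x \<in> carrier R" and y: "y \<in> carrier R" and z: "z \<in> carrier R" and xyz: "x \<otimes> y \<otimes> z \<in> I" for x y z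
  proof (cases "a = \<zero>")
    case True
    hence I0: "I = {\<zero>}" using a PIdl_zero by simp
    hence "x \<otimes> y \<otimes> z = \<zero>" using xyz by simp
    hence "x \<otimes> y = \<zero> \<or> z = \<zero>" using integral[of "x \<otimes> y" z] x y z by simp
    thus ?thesis
    proof
      assume "x \<otimes> y = \<zero>" thus ?thesis using I0 by simp
    next
      assume "z = \<zero>" hence "x \<otimes> z \<in> I" using I0 x by simp
      thus ?thesis using sub_radical[OF Ic] by blast
    qed
  next
    case False
    obtain u n where u: "u \<in> Units R" "a = u \<otimes> p [^] (n::nat)" using valuation[OF a(1) False] by blast
    have uc: "u \<in> carrier R" "inv u \<in> carrier R" using u by auto
    have pn: "p [^] n \<in> carrier R" using p_carr by simp
    have pnI: "p [^] n \<in> I"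
    proof -
      have "inv u \<otimes> a = (inv u \<otimes> u) \<otimes> p [^] n" unfolding u(2) using m_assoc[OF uc(2) uc(1) pn] by simp
      also have "\<dots> = p [^] n" using u pn by simp
      finally have "inv u \<otimes> a = p [^] n" .
      hence "p [^] n \<in> PIdl a" unfolding PIdl_mem using uc(2) by (intro bexI[of _ "inv u"]) simp_all
      thus ?thesis using a(2) by simp
    qed
    have Prad: "PIdl p \<subseteq> ideal_radical R I"
    proof
      fix w assume "w \<in> PIdl p"
      then obtain r where r: "r \<in> carrier R" "w = r \<otimes> p" using PIdl_mem by blast
      have "w [^] n = r [^] n \<otimes> p [^] n" using r p_carr pow_mult_distrib[OF m_comm[OF r(1) p_carr] r(1) p_carr] by simp
      also have "\<dots> \<in> I" using ideal.I_l_closed[OF I pnI] r by simp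
      finally have "w [^] n \<in> I" .
      moreover have "w \<in> carrier R" using r p_carr by simp
      ultimately show "w \<in> ideal_radical R I" unfolding ideal_radical_def by blast
    qed
    show ?thesis
    proof (cases "z \<in> PIdl p")
      case True
      hence "x \<otimes> z \<in> PIdl p" using ideal.I_l_closed[OF cgenideal_ideal[OF p_carr] True x] by simp
      thus ?thesis using Prad by blast
    next
      case False
      hence zu: "z \<in> Units R" using notin_P_unit z by blast
      have "x \<otimes> y \<otimes> z \<otimes> inv z \<in> I" using ideal.I_r_closed[OF I xyz] zu by simp
      moreover have "x \<otimes> y \<otimes> z \<otimes> inv z = x \<otimes> y \<otimes> (z \<otimes> inv z)" using x y zu by (intro m_assoc) auto
      moreover have "z \<otimes> inv z = \<one>" using zu by simp
      ultimately have "x \<otimes> y \<in> I" using x y by simp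
      thus ?thesis by blast
    qed
  qed
  show ?thesis unfolding two_absorbing_primary_def
    by (intro conjI I prp ballI impI main)
qed

end



lemma smult_submod:
  fixes R (structure)
  assumes mod: "module R M" and a: "a \<in> carrier R"
  shows "submodule {a \<odot>\<^bsub>M\<^esub> x | x. x \<in> carrier M} R M"
proof -
  interpret module R M by (rule mod)
  show ?thesis
  proof (rule submoduleI)
    show "{a \<odot>\<^bsub>M\<^esub> x | x. x \<in> carrier M} \<subseteq> carrier M" using a by blast
    have "\<zero>\<^bsub>M\<^esub> = a \<odot>\<^bsub>M\<^esub> \<zero>\<^bsub>M\<^esub>" using a by simp
    thus "\<zero>\<^bsub>M\<^esub> \<in> {a \<odot>\<^bsub>M\<^esub> x | x. x \<in> carrier M}" by blast
  next
    fix y assume "y \<in> {a \<odot>\<^bsub>M\<^esub> x | x. x \<in> carrier M}"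
    then obtain x where x: "x \<in> carrier M" "y = a \<odot>\<^bsub>M\<^esub> x" by blast
    have "\<ominus>\<^bsub>M\<^esub> y = a \<odot>\<^bsub>M\<^esub> (\<ominus>\<^bsub>M\<^esub> x)" using x a by (simp add: smult_r_minus)
    moreover have "\<ominus>\<^bsub>M\<^esub> x \<in> carrier M" using x by simp
    ultimately show "\<ominus>\<^bsub>M\<^esub> y \<in> {a \<odot>\<^bsub>M\<^esub> x | x. x \<in> carrier M}" by blast
  next
    fix y z assume "y \<in> {a \<odot>\<^bsub>M\<^esub> x | x. x \<in> carrier M}" "z \<in> {a \<odot>\<^bsub>M\<^esub> x | x. x \<in> carrier M}"
    then obtain x w where x: "x \<in> carrier M" "y = a \<odot>\<^bsub>M\<^esub> x" and w: "w \<in> carrier M" "z = a \<odot>\<^bsub>M\<^esub> w" by blast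
    have "y \<oplus>\<^bsub>M\<^esub> z = a \<odot>\<^bsub>M\<^esub> (x \<oplus>\<^bsub>M\<^esub> w)" using x w a by (simp add: smult_r_distr)
    moreover have "x \<oplus>\<^bsub>M\<^esub> w \<in> carrier M" using x w by simp
    ultimately show "y \<oplus>\<^bsub>M\<^esub> z \<in> {a \<odot>\<^bsub>M\<^esub> x | x. x \<in> carrier M}" by blast
  next
    fix r y assume r: "r \<in> carrier R" and "y \<in> {a \<odot>\<^bsub>M\<^esub> x | x. x \<in> carrier M}"
    then obtain x where x: "x \<in> carrier M" "y = a \<odot>\<^bsub>M\<^esub> x" by blast
    have "r \<odot>\<^bsub>M\<^esub> y = a \<odot>\<^bsub>M\<^esub> (r \<odot>\<^bsub>M\<^esub> x)" using x a r
      by (simp add: smult_assoc1[symmetric] m_comm)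
    moreover have "r \<odot>\<^bsub>M\<^esub> x \<in> carrier M" using x r by simp
    ultimately show "r \<odot>\<^bsub>M\<^esub> y \<in> {a \<odot>\<^bsub>M\<^esub> x | x. x \<in> carrier M}" by blast
  qed
qed

lemma cyc_submod:
  fixes R (structure)
  assumes mod: "module R M" and m: "m \<in> carrier M"
  shows "submodule {r \<odot>\<^bsub>M\<^esub> m | r. r \<in> carrier R} R M"
proof -
  interpret module R M by (rule mod)
  show ?thesis
  proof (rule submoduleI)
    show "{r \<odot>\<^bsub>M\<^esub> m | r. r \<in> carrier R} \<subseteq> carrier M" using m by blast
    have "\<zero>\<^bsub>M\<^esub> = \<zero> \<odot>\<^bsub>M\<^esub> m" using m by simp
    thus "\<zero>\<^bsub>M\<^esub> \<in> {r \<odot>\<^bsub>M\<^esub> m | r. r \<in> carrier R}" by blast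
  next
    fix y assume "y \<in> {r \<odot>\<^bsub>M\<^esub> m | r. r \<in> carrier R}"
    then obtain r where r: "r \<in> carrier R" "y = r \<odot>\<^bsub>M\<^esub> m" by blast
    have "\<ominus>\<^bsub>M\<^esub> y = (\<ominus> r) \<odot>\<^bsub>M\<^esub> m" using r m by (simp add: smult_l_minus)
    moreover have "\<ominus> r \<in> carrier R" using r by simp
    ultimately show "\<ominus>\<^bsub>M\<^esub> y \<in> {r \<odot>\<^bsub>M\<^esub> m | r. r \<in> carrier R}" by blast
  next
    fix y z assume "y \<in> {r \<odot>\<^bsub>M\<^esub> m | r. r \<in> carrier R}" "z \<in> {r \<odot>\<^bsub>M\<^esub> m | r. r \<in> carrier R}"
    then obtain r s where r: "r \<in> carrier R" "y = r \<odot>\<^bsub>M\<^esub> m" and s: "s \<in> carrier R" "z = s \<odot>\<^bsub>M\<^esub> m" by blast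
    have "y \<oplus>\<^bsub>M\<^esub> z = (r \<oplus> s) \<odot>\<^bsub>M\<^esub> m" using r s m by (simp add: smult_l_distr)
    moreover have "r \<oplus> s \<in> carrier R" using r s by simp
    ultimately show "y \<oplus>\<^bsub>M\<^esub> z \<in> {r \<odot>\<^bsub>M\<^esub> m | r. r \<in> carrier R}" by blast
  next
    fix t y assume t: "t \<in> carrier R" and "y \<in> {r \<odot>\<^bsub>M\<^esub> m | r. r \<in> carrier R}"
    then obtain r where r: "r \<in> carrier R" "y = r \<odot>\<^bsub>M\<^esub> m" by blast
    have "t \<odot>\<^bsub>M\<^esub> y = (t \<otimes> r) \<odot>\<^bsub>M\<^esub> m" using r m t by (simp add: smult_assoc1)
    moreover have "t \<otimes> r \<in> carrier R" using r t by simp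
    ultimately show "t \<odot>\<^bsub>M\<^esub> y \<in> {r \<odot>\<^bsub>M\<^esub> m | r. r \<in> carrier R}" by blast
  qed
qed

lemma colon_ideal:
  fixes R (structure)
  assumes mod: "module R M" and N: "submodule N R M" and Nne: "N \<noteq> carrier M"
  shows "ideal (module_colon R M N) R" "module_colon R M N \<noteq> carrier R"
proof -
  interpret module R M by (rule mod)
  note NE = submoduleE[OF N]
  show "ideal (module_colon R M N) R"
  proof (rule ideal_closure)
    show "module_colon R M N \<subseteq> carrier R" unfolding module_colon_def by blast
    obtain b where b: "b \<in> N" using NE(2) by blast
    have z: "\<zero>\<^bsub>M\<^esub> \<in> N" using NE(4)[OF R.zero_closed b] b NE(1) by auto
    show "\<zero> \<in> module_colon R M N" unfolding module_colon_def using z by simp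
    fix a b assume a: "a \<in> module_colon R M N"
    { assume b: "b \<in> module_colon R M N"
      thus "a \<oplus> b \<in> module_colon R M N" using a NE(5) unfolding module_colon_def by (simp add: smult_l_distr) }
    { assume b: "b \<in> carrier R"
      thus "b \<otimes> a \<in> module_colon R M N" using a NE(4) unfolding module_colon_def by (simp add: smult_assoc1) }
  qed
  show "module_colon R M N \<noteq> carrier R"
  proof
    assume "module_colon R M N = carrier R"
    hence "\<forall>x\<in>carrier M. \<one> \<odot>\<^bsub>M\<^esub> x \<in> N" unfolding module_colon_def by blast
    hence "carrier M \<subseteq> N" by auto
    thus False using NE(1) Nne by blast
  qed
qed

lemma pap_sub:
  fixes R (structure)
  assumes D: "dvr_loc R p" and mod: "module R M" and pm: "pap_multiplication_module R M"
    and N: "submodule N R M" and Nne: "N \<noteq> carrier M"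
  shows "\<exists>I. ideal I R \<and> N = ideal_times_module R I M"
proof -
  interpret dvr_loc R p by (rule D)
  have "two_absorbing_primary R (module_colon R M N)"
    using two_abs colon_ideal[OF mod N Nne] by blast
  hence "pseudo_absorbing_primary R M N" unfolding pseudo_absorbing_primary_def using N Nne by blast
  thus ?thesis using pm unfolding pap_multiplication_module_def by blast
qed



lemma pow_all:
  fixes R (structure)
  assumes mod: "module R M" and p: "p \<in> carrier R"
    and cov: "carrier M \<subseteq> {p \<odot>\<^bsub>M\<^esub> x | x. x \<in> carrier M}"
  shows "\<forall>y\<in>carrier M. \<exists>z\<in>carrier M. y = (p [^] (n::nat)) \<odot>\<^bsub>M\<^esub> z"
proof (induction n)
  interpret module R M by (rule mod)
  case 0 show ?case by simp
next
  interpret module R M by (rule mod)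
  case (Suc n)
  show ?case
  proof
    fix y assume y: "y \<in> carrier M"
    then obtain z where z: "z \<in> carrier M" "y = (p [^] n) \<odot>\<^bsub>M\<^esub> z" using Suc by blast
    then obtain w where w: "w \<in> carrier M" "z = p \<odot>\<^bsub>M\<^esub> w" using cov by blast
    have "y = (p [^] n \<otimes> p) \<odot>\<^bsub>M\<^esub> w" using z w p by (simp add: smult_assoc1)
    also have "\<dots> = (p [^] Suc n) \<odot>\<^bsub>M\<^esub> w" by simp
    finally show "\<exists>z\<in>carrier M. y = (p [^] Suc n) \<odot>\<^bsub>M\<^esub> z" using w by blast
  qed
qed

lemma forward_cyclic:
  fixes R (structure)
  assumes D: "dvr_loc R p" and mod: "module R M" and pm: "pap_multiplication_module R M"
    and nz: "carrier M \<noteq> {\<zero>\<^bsub>M\<^esub>}"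
  shows "\<exists>m\<in>carrier M. \<forall>x\<in>carrier M. \<exists>r\<in>carrier R. x = r \<odot>\<^bsub>M\<^esub> m"
proof -
  interpret dvr_loc R p by (rule D)
  interpret module R M by (rule mod)
  define pM where "pM = {p \<odot>\<^bsub>M\<^esub> x | x. x \<in> carrier M}"
  have pMs: "submodule pM R M" unfolding pM_def by (rule smult_submod[OF mod p_carr])
  have claim: "{r \<odot>\<^bsub>M\<^esub> m | r. r \<in> carrier R} = carrier M"
    if m: "m \<in> carrier M" and nm: "m \<notin> pM \<or> (carrier M \<subseteq> pM \<and> m \<noteq> \<zero>\<^bsub>M\<^esub>)" for m
  proof (rule ccontr)
    define Rm where "Rm = {r \<odot>\<^bsub>M\<^esub> m | r. r \<in> carrier R}"
    assume "{r \<odot>\<^bsub>M\<^esub> m | r. r \<in> carrier R} \<noteq> carrier M"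
    hence ne: "Rm \<noteq> carrier M" unfolding Rm_def .
    have Rms: "submodule Rm R M" unfolding Rm_def by (rule cyc_submod[OF mod m])
    obtain I where I: "ideal I R" "Rm = ideal_times_module R I M"
      using pap_sub[OF D mod pm Rms ne] by blast
    have mRm: "m \<in> Rm"
    proof -
      have "m = \<one> \<odot>\<^bsub>M\<^esub> m" using m by simp
      thus ?thesis unfolding Rm_def by blast
    qed
    have RmC: "Rm \<subseteq> carrier M" using submoduleE(1)[OF Rms] .
    have nounit: False if a: "a \<in> I" "a \<in> Units R" for a
    proof -
      have "carrier M \<subseteq> Rm"
      proof
        fix y assume y: "y \<in> carrier M"
        have ic: "inv a \<in> carrier R" "a \<in> carrier R" using a by auto
        have "a \<odot>\<^bsub>M\<^esub> (inv a \<odot>\<^bsub>M\<^esub> y) = (a \<otimes> inv a) \<odot>\<^bsub>M\<^esub> y" using ic y by (simp add: smult_assoc1)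
        also have "\<dots> = y" using a y by simp
        finally have "y = a \<odot>\<^bsub>M\<^esub> (inv a \<odot>\<^bsub>M\<^esub> y)" by simp
        moreover have "inv a \<odot>\<^bsub>M\<^esub> y \<in> carrier M" using ic y by simp
        ultimately show "y \<in> Rm" using IM_gen[OF a(1)] I(2) by metis
      qed
      thus False using RmC ne by blast
    qed
    from nm show False
    proof
      assume mp: "m \<notin> pM"
      show False
      proof (cases "I \<subseteq> PIdl p")
        case True
        have "ideal_times_module R I M \<subseteq> pM"
        proof (rule IM_least[OF pMs])
          fix a x assume a: "a \<in> I" and x: "x \<in> carrier M"
          then obtain r where r: "r \<in> carrier R" "a = r \<otimes> p" using True PIdl_mem by blast
          have "a \<odot>\<^bsub>M\<^esub> x = p \<odot>\<^bsub>M\<^esub> (r \<odot>\<^bsub>M\<^esub> x)" using r x p_carr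
            by (simp add: smult_assoc1[symmetric] m_comm)
          moreover have "r \<odot>\<^bsub>M\<^esub> x \<in> carrier M" using r x by simp
          ultimately show "a \<odot>\<^bsub>M\<^esub> x \<in> pM" unfolding pM_def by blast
        qed
        thus False using mRm I(2) mp by blast
      next
        case False
        then obtain a where a: "a \<in> I" "a \<notin> PIdl p" by blast
        have "a \<in> Units R" using notin_P_unit ideal.Icarr[OF I(1) a(1)] a(2) by blast
        thus False using nounit a(1) by blast
      qed
    next
      assume cm: "carrier M \<subseteq> pM \<and> m \<noteq> \<zero>\<^bsub>M\<^esub>"
      obtain a where a: "a \<in> carrier R" "I = PIdl a" using exists_gen[OF I(1)] by (elim bexE)
      have zc: "\<zero> \<in> carrier R" by simp
      show False
      proof (cases "a = \<zero>")
        case True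
        have "ideal_times_module R I M \<subseteq> {\<zero> \<odot>\<^bsub>M\<^esub> x | x. x \<in> carrier M}"
        proof (rule IM_least[OF smult_submod[OF mod zc]])
          fix b x assume b: "b \<in> I" and x: "x \<in> carrier M"
          have "b = \<zero>" using b a(2) True PIdl_zero by simp
          thus "b \<odot>\<^bsub>M\<^esub> x \<in> {\<zero> \<odot>\<^bsub>M\<^esub> x | x. x \<in> carrier M}" using x by blast
        qed
        hence "m \<in> {\<zero> \<odot>\<^bsub>M\<^esub> x | x. x \<in> carrier M}" using mRm I(2) by blast
        then obtain x where "x \<in> carrier M" "m = \<zero> \<odot>\<^bsub>M\<^esub> x" by blast
        hence "m = \<zero>\<^bsub>M\<^esub>" by simp
        thus False using cm by blast
      next
        case False
        obtain u n where u: "u \<in> Units R" "a = u \<otimes> p [^] (n::nat)" using valuation[OF a(1) False] by blast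
        have uc: "u \<in> carrier R" "inv u \<in> carrier R" using u by auto
        have pn: "p [^] n \<in> carrier R" using p_carr by simp
        have ainv: "a \<otimes> inv u = p [^] n"
        proof -
          have "a \<otimes> inv u = p [^] n \<otimes> (u \<otimes> inv u)" unfolding u(2)
            using uc pn m_comm[OF uc(1) pn] m_assoc[OF pn uc(1) uc(2)] by simp
          thus ?thesis using u pn by simp
        qed
        have aI: "a \<in> I" using a cgenideal_self by simp
        have "carrier M \<subseteq> Rm"
        proof
          fix y assume y: "y \<in> carrier M"
          obtain z where z: "z \<in> carrier M" "y = (p [^] n) \<odot>\<^bsub>M\<^esub> z"
            using pow_all[OF mod p_carr, of n] cm unfolding pM_def using y by blast
          have "y = a \<odot>\<^bsub>M\<^esub> (inv u \<odot>\<^bsub>M\<^esub> z)" using z ainv uc a(1)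
            by (simp add: smult_assoc1[symmetric])
          moreover have "inv u \<odot>\<^bsub>M\<^esub> z \<in> carrier M" using uc z by simp
          ultimately show "y \<in> Rm" using IM_gen[OF aI] I(2) by metis
        qed
        thus False using RmC ne by blast
      qed
    qed
  qed
  show ?thesis
  proof (cases "\<exists>m\<in>carrier M. m \<notin> pM")
    case True
    then obtain m where m: "m \<in> carrier M" "m \<notin> pM" by blast
    thus ?thesis using claim[OF m(1)] by blast
  next
    case False
    hence cov: "carrier M \<subseteq> pM" by blast
    obtain m where m: "m \<in> carrier M" "m \<noteq> \<zero>\<^bsub>M\<^esub>" using nz M.zero_closed by blast
    thus ?thesis using claim[OF m(1)] cov by blast
  qed
qed



lemma forward_ann:
  fixes R (structure)
  assumes D: "dvr_loc R p" and mod: "module R M" and m: "m \<in> carrier M"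
    and gen: "\<forall>x\<in>carrier M. \<exists>r\<in>carrier R. x = r \<odot>\<^bsub>M\<^esub> m"
    and nz: "carrier M \<noteq> {\<zero>\<^bsub>M\<^esub>}"
  shows "\<exists>I. (\<forall>r\<in>carrier R. (r \<odot>\<^bsub>M\<^esub> m = \<zero>\<^bsub>M\<^esub>) = (r \<in> I))
           \<and> (I = {\<zero>} \<or> (\<exists>n::nat. n \<ge> 1 \<and> I = PIdl (p [^] n)))"
proof -
  interpret dvr_loc R p by (rule D)
  interpret module R M by (rule mod)
  define J where "J = {r \<in> carrier R. r \<odot>\<^bsub>M\<^esub> m = \<zero>\<^bsub>M\<^esub>}"
  have ann: "\<forall>r\<in>carrier R. (r \<odot>\<^bsub>M\<^esub> m = \<zero>\<^bsub>M\<^esub>) = (r \<in> J)" unfolding J_def by blast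
  have "ideal J R"
  proof (rule ideal_closure)
    show "J \<subseteq> carrier R" unfolding J_def by blast
    show "\<zero> \<in> J" unfolding J_def using m by simp
    fix a b assume a: "a \<in> J"
    { assume b: "b \<in> J"
      thus "a \<oplus> b \<in> J" using a m unfolding J_def by (simp add: smult_l_distr) }
    { assume b: "b \<in> carrier R"
      thus "b \<otimes> a \<in> J" using a m unfolding J_def by (simp add: smult_assoc1) }
  qed
  then obtain a where a: "a \<in> carrier R" "J = PIdl a" using exists_gen[OF \<open>ideal J R\<close>] by (elim bexE)
  show ?thesis
  proof (cases "a = \<zero>")
    case True
    hence "J = {\<zero>}" using a PIdl_zero by simp
    thus ?thesis using ann by blast
  next
    case False
    obtain u n where u: "u \<in> Units R" "a = u \<otimes> p [^] (n::nat)" using valuation[OF a(1) False] by blast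
    have pn: "p [^] n \<in> carrier R" using p_carr by simp
    have "a \<sim> p [^] n" using ring_associated_iff[OF a(1) pn] u by blast
    hence Jeq: "J = PIdl (p [^] n)" using associated_iff_same_ideal[OF a(1) pn] a(2) by simp
    have "n \<noteq> 0"
    proof
      assume "n = 0"
      hence "J = PIdl \<one>" using Jeq by simp
      hence "J = carrier R" using ideal_eq_carrier_iff[of \<one>] by simp
      hence "\<one> \<odot>\<^bsub>M\<^esub> m = \<zero>\<^bsub>M\<^esub>" using ann by simp
      hence m0: "m = \<zero>\<^bsub>M\<^esub>" using m by simp
      have "carrier M \<subseteq> {\<zero>\<^bsub>M\<^esub>}"
      proof
        fix x assume "x \<in> carrier M"
        then obtain r where "r \<in> carrier R" "x = r \<odot>\<^bsub>M\<^esub> m" using gen by blast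
        thus "x \<in> {\<zero>\<^bsub>M\<^esub>}" using m0 by simp
      qed
      thus False using nz M.zero_closed by blast
    qed
    hence "n \<ge> 1" by simp
    thus ?thesis using ann Jeq by blast
  qed
qed

lemma backward_indec:
  fixes R (structure)
  assumes D: "dvr_loc R p" and mod: "module R M" and m: "m \<in> carrier M"
    and gen: "\<forall>x\<in>carrier M. \<exists>r\<in>carrier R. x = r \<odot>\<^bsub>M\<^esub> m"
    and ann: "\<forall>r\<in>carrier R. (r \<odot>\<^bsub>M\<^esub> m = \<zero>\<^bsub>M\<^esub>) = (r \<in> I)"
    and one: "\<one> \<notin> I"
  shows "indecomposable_module R M"
  unfolding indecomposable_module_def
proof
  interpret dvr_loc R p by (rule D)
  interpret module R M by (rule mod)
  have "m \<noteq> \<zero>\<^bsub>M\<^esub>"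
  proof
    assume "m = \<zero>\<^bsub>M\<^esub>"
    hence "\<one> \<odot>\<^bsub>M\<^esub> m = \<zero>\<^bsub>M\<^esub>" using m by simp
    thus False using ann one by simp
  qed
  thus "carrier M \<noteq> {\<zero>\<^bsub>M\<^esub>}" using m by blast
  have nzel: "\<exists>x\<in>N. x \<noteq> \<zero>\<^bsub>M\<^esub>" if "submodule N R M" "N \<noteq> {\<zero>\<^bsub>M\<^esub>}" for N
  proof -
    have "N \<noteq> {}" using submoduleE(2)[OF that(1)] .
    thus ?thesis using that(2) by (metis empty_iff insertI1 subsetI subset_singletonD)
  qed
  have absorb: "y \<in> N" if N: "submodule N R M" and x: "x \<in> N" and y: "y \<in> carrier M"
    and xa: "x = a \<odot>\<^bsub>M\<^esub> m" and yb: "y = b \<odot>\<^bsub>M\<^esub> m" and a: "a \<in> carrier R" and b: "b \<in> carrier R"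
    and d: "a divides b" for N x y a b
  proof -
    obtain c where c: "c \<in> carrier R" "b = a \<otimes> c" using d unfolding factor_def by blast
    have "y = c \<odot>\<^bsub>M\<^esub> x" using yb xa c a m by (simp add: smult_assoc1[symmetric] m_comm)
    thus "y \<in> N" using submoduleE(4)[OF N c(1) x] by simp
  qed
  show "\<not> (\<exists>N K. submodule N R M \<and> submodule K R M \<and> N \<noteq> {\<zero>\<^bsub>M\<^esub>} \<and> K \<noteq> {\<zero>\<^bsub>M\<^esub>} \<and>
            N \<inter> K = {\<zero>\<^bsub>M\<^esub>} \<and> N <+>\<^bsub>M\<^esub> K = carrier M)"
  proof
    assume "\<exists>N K. submodule N R M \<and> submodule K R M \<and> N \<noteq> {\<zero>\<^bsub>M\<^esub>} \<and> K \<noteq> {\<zero>\<^bsub>M\<^esub>} \<and>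
            N \<inter> K = {\<zero>\<^bsub>M\<^esub>} \<and> N <+>\<^bsub>M\<^esub> K = carrier M"
    then obtain N K where N: "submodule N R M" and K: "submodule K R M" and Nn: "N \<noteq> {\<zero>\<^bsub>M\<^esub>}"
      and Kn: "K \<noteq> {\<zero>\<^bsub>M\<^esub>}" and NK: "N \<inter> K = {\<zero>\<^bsub>M\<^esub>}" by blast
    obtain x where x: "x \<in> N" "x \<noteq> \<zero>\<^bsub>M\<^esub>" using nzel[OF N Nn] by blast
    obtain y where y: "y \<in> K" "y \<noteq> \<zero>\<^bsub>M\<^esub>" using nzel[OF K Kn] by blast
    have xc: "x \<in> carrier M" using x submoduleE(1)[OF N] by blast
    have yc: "y \<in> carrier M" using y submoduleE(1)[OF K] by blast
    obtain a where a: "a \<in> carrier R" "x = a \<odot>\<^bsub>M\<^esub> m" using gen xc by blast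
    obtain b where b: "b \<in> carrier R" "y = b \<odot>\<^bsub>M\<^esub> m" using gen yc by blast
    from total_div[OF a(1) b(1)] show False
    proof
      assume "a divides b"
      hence "y \<in> N" using absorb[OF N x(1) yc a(2) b(2) a(1) b(1)] by simp
      thus False using y NK by blast
    next
      assume "b divides a"
      hence "x \<in> K" using absorb[OF K y(1) xc b(2) a(2) b(1) a(1)] by simp
      thus False using x NK by blast
    qed
  qed
qed

lemma self_props:
  fixes R (structure)
  assumes "cring R"
  shows "carrier (self_module R) = (\<lambda>r. r) ` carrier R"
    "\<forall>r\<in>carrier R. \<forall>s\<in>carrier R. (\<lambda>r. r) (r \<oplus> s) = (\<lambda>r. r) r \<oplus>\<^bsub>self_module R\<^esub> (\<lambda>r. r) s"
    "\<forall>t\<in>carrier R. \<forall>r\<in>carrier R. t \<odot>\<^bsub>self_module R\<^esub> (\<lambda>r. r) r = (\<lambda>r. r) (t \<otimes> r)"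
    "\<forall>r\<in>carrier R. \<forall>s\<in>carrier R. ((\<lambda>r. r) r = (\<lambda>r. r) s) = (r \<ominus> s \<in> {\<zero>})"
proof -
  interpret cring R by fact
  show "carrier (self_module R) = (\<lambda>r. r) ` carrier R" by (simp add: self_module_def)
  show "\<forall>r\<in>carrier R. \<forall>s\<in>carrier R. (\<lambda>r. r) (r \<oplus> s) = (\<lambda>r. r) r \<oplus>\<^bsub>self_module R\<^esub> (\<lambda>r. r) s"
    by (simp add: self_module_def)
  show "\<forall>t\<in>carrier R. \<forall>r\<in>carrier R. t \<odot>\<^bsub>self_module R\<^esub> (\<lambda>r. r) r = (\<lambda>r. r) (t \<otimes> r)"
    by (simp add: self_module_def)
  show "\<forall>r\<in>carrier R. \<forall>s\<in>carrier R. ((\<lambda>r. r) r = (\<lambda>r. r) s) = (r \<ominus> s \<in> {\<zero>})"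
  proof (intro ballI)
    fix r s assume r: "r \<in> carrier R" and s: "s \<in> carrier R"
    have "r \<ominus> s \<oplus> s = r" using r s by (simp add: a_minus_def a_assoc l_neg)
    moreover have "s \<ominus> s = \<zero>" using s by (simp add: a_minus_def r_neg)
    ultimately show "((\<lambda>r. r) r = (\<lambda>r. r) s) = (r \<ominus> s \<in> {\<zero>})" using s by auto
  qed
qed

lemma quot_props:
  fixes R (structure)
  assumes "cring R" and I: "ideal I R"
  shows "carrier (quot_module R I) = (a_r_coset R I) ` carrier R"
    "\<forall>r\<in>carrier R. \<forall>s\<in>carrier R. (a_r_coset R I) (r \<oplus> s) = (a_r_coset R I) r \<oplus>\<^bsub>quot_module R I\<^esub> (a_r_coset R I) s"
    "\<forall>t\<in>carrier R. \<forall>r\<in>carrier R. t \<odot>\<^bsub>quot_module R I\<^esub> (a_r_coset R I) r = (a_r_coset R I) (t \<otimes> r)"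
    "\<forall>r\<in>carrier R. \<forall>s\<in>carrier R. ((a_r_coset R I) r = (a_r_coset R I) s) = (r \<ominus> s \<in> I)"
proof -
  interpret cring R by fact
  have hom: "(a_r_coset R I) \<in> ring_hom R (R Quot I)" using ideal.rcos_ring_hom[OF I] .
  show "carrier (quot_module R I) = (a_r_coset R I) ` carrier R"
    by (simp add: quot_module_def FactRing_def A_RCOSETS_def') blast
  show "\<forall>r\<in>carrier R. \<forall>s\<in>carrier R. (a_r_coset R I) (r \<oplus> s) = (a_r_coset R I) r \<oplus>\<^bsub>quot_module R I\<^esub> (a_r_coset R I) s"
    using ring_hom_add[OF hom] by (simp add: quot_module_def)
  show "\<forall>t\<in>carrier R. \<forall>r\<in>carrier R. t \<odot>\<^bsub>quot_module R I\<^esub> (a_r_coset R I) r = (a_r_coset R I) (t \<otimes> r)"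
    using ring_hom_mult[OF hom] by (simp add: quot_module_def)
  show "\<forall>r\<in>carrier R. \<forall>s\<in>carrier R. ((a_r_coset R I) r = (a_r_coset R I) s) = (r \<ominus> s \<in> I)"
    using quotient_eq_iff_same_a_r_cos[OF I] by simp
qed



lemma theorem2p6_aux:
  fixes R :: "('a, 'c) ring_scheme" (structure) and p :: 'a and M :: "('a, 'b, 'd) module_scheme"
  assumes "DVR R" and "p \<in> carrier R" and "maximalideal (PIdl\<^bsub>R\<^esub> p) R"
    and "module R M"
  shows "(indecomposable_module R M \<and> pap_multiplication_module R M) \<longleftrightarrow>
           (module_iso R M (self_module R) \<or>
            (\<exists>n::nat. n \<ge> 1 \<and> module_iso R M (quot_module R (PIdl\<^bsub>R\<^esub> (p [^]\<^bsub>R\<^esub> n)))))"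
proof -
  have pd: "principal_domain R" and uq: "\<exists>!P. primeideal P R \<and> P \<noteq> {\<zero>\<^bsub>R\<^esub>}"
    using assms(1) unfolding DVR_def by auto
  have D: "dvr_loc R p"
    by (rule dvr_loc.intro[OF pd]) (rule dvr_loc_axioms.intro[OF assms(2) assms(3) uq])
  interpret dvr_loc R p by (rule D)
  note mod = assms(4)
  have cr: "cring R" by (rule is_cring)
  show ?thesis
  proof
    assume L: "indecomposable_module R M \<and> pap_multiplication_module R M"
    have nz: "carrier M \<noteq> {\<zero>\<^bsub>M\<^esub>}" using L unfolding indecomposable_module_def by blast
    obtain m where m: "m \<in> carrier M" and gen: "\<forall>x\<in>carrier M. \<exists>r\<in>carrier R. x = r \<odot>\<^bsub>M\<^esub> m"
      using forward_cyclic[OF D mod _ nz] L by blast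
    obtain I where ann: "\<forall>r\<in>carrier R. (r \<odot>\<^bsub>M\<^esub> m = \<zero>\<^bsub>M\<^esub>) = (r \<in> I)"
      and cs: "I = {\<zero>} \<or> (\<exists>n::nat. n \<ge> 1 \<and> I = PIdl (p [^] n))"
      using forward_ann[OF D mod m gen nz] by blast
    from cs show "module_iso R M (self_module R) \<or>
            (\<exists>n::nat. n \<ge> 1 \<and> module_iso R M (quot_module R (PIdl (p [^] n))))"
    proof
      assume I0: "I = {\<zero>}"
      have "module_iso R M (self_module R)"
        using cyclic_iso[OF mod m gen _ self_props[OF cr]] ann I0 by simp
      thus ?thesis by blast
    next
      assume "\<exists>n::nat. n \<ge> 1 \<and> I = PIdl (p [^] n)"
      then obtain n :: nat where n: "n \<ge> 1" "I = PIdl (p [^] n)" by blast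
      have II: "ideal I R" using n(2) cgenideal_ideal p_carr by simp
      have "module_iso R M (quot_module R I)"
        using cyclic_iso[OF mod m gen ann quot_props[OF cr II]] .
      thus ?thesis using n by blast
    qed
  next
    assume Rt: "module_iso R M (self_module R) \<or>
            (\<exists>n::nat. n \<ge> 1 \<and> module_iso R M (quot_module R (PIdl (p [^] n))))"
    have fin: "indecomposable_module R M \<and> pap_multiplication_module R M"
      if c: "\<exists>m\<in>carrier M. (\<forall>x\<in>carrier M. \<exists>r\<in>carrier R. x = r \<odot>\<^bsub>M\<^esub> m)
           \<and> (\<forall>r\<in>carrier R. (r \<odot>\<^bsub>M\<^esub> m = \<zero>\<^bsub>M\<^esub>) = (r \<in> I))" and one: "\<one> \<notin> I" for I
    proof -
      obtain m where m: "m \<in> carrier M" and gen: "\<forall>x\<in>carrier M. \<exists>r\<in>carrier R. x = r \<odot>\<^bsub>M\<^esub> m"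
        and ann: "\<forall>r\<in>carrier R. (r \<odot>\<^bsub>M\<^esub> m = \<zero>\<^bsub>M\<^esub>) = (r \<in> I)" using c by blast
      show ?thesis using backward_indec[OF D mod m gen ann one] cyclic_mult[OF mod m gen] by blast
    qed
    from Rt show "indecomposable_module R M \<and> pap_multiplication_module R M"
    proof
      assume iso: "module_iso R M (self_module R)"
      have sp: "carrier (self_module R) = (\<lambda>r. r) ` carrier R"
        "\<forall>t\<in>carrier R. \<forall>r\<in>carrier R. t \<odot>\<^bsub>self_module R\<^esub> (\<lambda>r. r) r = (\<lambda>r. r) (t \<otimes> r)"
        "\<forall>r\<in>carrier R. \<forall>s\<in>carrier R. ((\<lambda>r. r) r = (\<lambda>r. r) s) = (r \<ominus> s \<in> {\<zero>})"
        using self_props[OF cr] by auto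
      have "\<one> \<notin> {\<zero>}" by simp
      thus ?thesis using fin[OF iso_cyclic[OF mod iso sp]] by blast
    next
      assume "\<exists>n::nat. n \<ge> 1 \<and> module_iso R M (quot_module R (PIdl (p [^] n)))"
      then obtain n :: nat where n: "n \<ge> 1" and iso: "module_iso R M (quot_module R (PIdl (p [^] n)))"
        by blast
      have pn: "p [^] n \<in> carrier R" using p_carr by simp
      have II: "ideal (PIdl (p [^] n)) R" using cgenideal_ideal[OF pn] .
      have qp: "carrier (quot_module R (PIdl (p [^] n))) = (a_r_coset R (PIdl (p [^] n))) ` carrier R"
        "\<forall>t\<in>carrier R. \<forall>r\<in>carrier R. t \<odot>\<^bsub>quot_module R (PIdl (p [^] n))\<^esub> (a_r_coset R (PIdl (p [^] n))) r
            = (a_r_coset R (PIdl (p [^] n))) (t \<otimes> r)"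
        "\<forall>r\<in>carrier R. \<forall>s\<in>carrier R. ((a_r_coset R (PIdl (p [^] n))) r = (a_r_coset R (PIdl (p [^] n))) s)
            = (r \<ominus> s \<in> PIdl (p [^] n))"
        using quot_props[OF cr II] by auto
      have "\<one> \<notin> PIdl (p [^] n)"
      proof
        assume one: "\<one> \<in> PIdl (p [^] n)"
        have "p [^] n = p [^] (n - 1) \<otimes> p" using n p_carr nat_pow_Suc[of p "n - 1"] by simp
        moreover have "p [^] (n - 1) \<in> carrier R" using p_carr by simp
        ultimately have "p [^] n \<in> PIdl p" unfolding PIdl_mem by blast
        hence "PIdl (p [^] n) \<subseteq> PIdl p" using cgenideal_minimal[OF cgenideal_ideal[OF p_carr]] by blast
        hence "\<one> \<in> PIdl p" using one by blast
        hence "PIdl p = carrier R" using ideal.one_imp_carrier[OF cgenideal_ideal[OF p_carr]] by blast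
        thus False using maximalideal.I_notcarr[OF p_max] by simp
      qed
      thus ?thesis using fin[OF iso_cyclic[OF mod iso qp]] by blast
    qed
  qed
qed

theorem theorem2p6:
  fixes R :: "('a, 'c) ring_scheme" and p :: 'a and M :: "('a, 'b, 'd) module_scheme"
  assumes "DVR R" and "p \<in> carrier R" and "maximalideal (PIdl\<^bsub>R\<^esub> p) R"
    and "module R M"
  shows "(indecomposable_module R M \<and> pap_multiplication_module R M) \<longleftrightarrow>
           (module_iso R M (self_module R) \<or>
            (\<exists>n::nat. n \<ge> 1 \<and> module_iso R M (quot_module R (PIdl\<^bsub>R\<^esub> (p [^]\<^bsub>R\<^esub> n)))))"
  using theorem2p6_aux[OF assms] .

end
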